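(* Let $\mathcal{G}$ be an infinite connected graph with finite maximum degree $d_{\max}$, and let $H$ be its Hashimoto (non-backtracking) matrix, with $\rho\equiv\rho_{l^2}(H)$. Consider site percolation on $\mathcal{G}$ with open-vertex probability $p$. If $p<1/\rho$, then there exist a base $\rho'<1$ and a constant $C\ge d_{\max}(1-p\rho)^{-1}$ such that for every pair of vertices $u,v$ of $\mathcal{G}$, $$\tau_{u,v}\le C\,(\rho')^{d(u,v)},$$ where $d(u,v)$ is the graph distance.
   Context: For a graph $\mathcal{G}$ with vertex set $\mathcal{V}$ and edge set $\mathcal{E}$, let $\mathcal{A}(\mathcal{G})$ be the set of arcs (directed edges; each undirected edge gives two mutually reverse arcs). The Hashimoto matrix $H$ is indexed by $\mathcal{A}\times\mathcal{A}$, with $H_{a,b}=1$ iff the head of $a$ coincides with the tail of $b$ and $b$ is not the reverse of $a$, and $H_{a,b}=0$ otherwise (it is the adjacency matrix of the oriented line graph of $\mathcal{G}$). $\rho_{l^2}(H)$ denotes the spectral radius of $H$ viewed as an operator on $l^2(\mathcal{A})$, i.e. $\rho_{l^2}(H)=\lim_{m\to\infty}\|H^m\|_2^{1/m}$. In site percolation each vertex is independently open with probability $p$; $\mathcal{C}(v)$ is the connected component containing $v$ of the subgraph induced by open vertices ($\mathcal{C}(v)=\emptyset$ if $v$ is closed). The connectivity is $\tau_{u,v}=\mathbb{P}(u\in\mathcal{C}(v))$. *)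

theory Defs
  imports "HOL-Probability.Probability"
begin

text \<open>A graph on vertex type 'v is given by an adjacency relation E (assumed symmetric
and irreflexive in the theorem). The vertex set is UNIV.\<close>

definition nbrs :: "('v \<Rightarrow> 'v \<Rightarrow> bool) \<Rightarrow> 'v \<Rightarrow> 'v set" where
  "nbrs E x = {y. E x y}"

definition is_walk :: "('v \<Rightarrow> 'v \<Rightarrow> bool) \<Rightarrow> 'v list \<Rightarrow> bool" where
  "is_walk E xs \<longleftrightarrow> xs \<noteq> [] \<and> successively E xs"

definition graph_connected :: "('v \<Rightarrow> 'v \<Rightarrow> bool) \<Rightarrow> bool" where
  "graph_connected E \<longleftrightarrow> (\<forall>u v. \<exists>xs. is_walk E xs \<and> hd xs = u \<and> last xs = v)"

definition gdist :: "('v \<Rightarrow> 'v \<Rightarrow> bool) \<Rightarrow> 'v \<Rightarrow> 'v \<Rightarrow> nat" where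
  "gdist E u v = (LEAST n. \<exists>xs. is_walk E xs \<and> hd xs = u \<and> last xs = v \<and> length xs = Suc n)"

text \<open>Maximum degree (meaningful when degrees are bounded).\<close>
definition dmax :: "('v \<Rightarrow> 'v \<Rightarrow> bool) \<Rightarrow> nat" where
  "dmax E = Max ((\<lambda>x. card (nbrs E x)) ` UNIV)"

text \<open>Arcs and the Hashimoto (non-backtracking) operator acting on functions on arcs:
  (H f)(a) = sum over b with H_{a,b} = 1 of f(b).\<close>
definition arcs :: "('v \<Rightarrow> 'v \<Rightarrow> bool) \<Rightarrow> ('v \<times> 'v) set" where
  "arcs E = {(x, y). E x y}"

definition hash_apply :: "('v \<Rightarrow> 'v \<Rightarrow> bool) \<Rightarrow> ('v \<times> 'v \<Rightarrow> real) \<Rightarrow> ('v \<times> 'v \<Rightarrow> real)" where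
  "hash_apply E f a = (\<Sum>b\<in>{b \<in> arcs E. fst b = snd a \<and> snd b \<noteq> fst a}. f b)"

definition l2norm_arcs :: "('v \<Rightarrow> 'v \<Rightarrow> bool) \<Rightarrow> ('v \<times> 'v \<Rightarrow> real) \<Rightarrow> real" where
  "l2norm_arcs E f = sqrt (\<Sum>\<^sub>\<infinity>a\<in>arcs E. (f a)\<^sup>2)"

definition hash_pow_norm :: "('v \<Rightarrow> 'v \<Rightarrow> bool) \<Rightarrow> nat \<Rightarrow> real" where
  "hash_pow_norm E m = Sup {l2norm_arcs E ((hash_apply E ^^ m) f) | f.
       (\<lambda>a. (f a)\<^sup>2) summable_on arcs E \<and> l2norm_arcs E f \<le> 1}"

definition hash_rho :: "('v \<Rightarrow> 'v \<Rightarrow> bool) \<Rightarrow> real" where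
  "hash_rho E = lim (\<lambda>m. hash_pow_norm E m powr (1 / real m))"

text \<open>Site percolation: product Bernoulli(p) measure on configurations (True = open).\<close>
definition perc :: "real \<Rightarrow> ('v \<Rightarrow> bool) measure" where
  "perc p = PiM UNIV (\<lambda>_. measure_pmf (bernoulli_pmf p))"

definition in_cluster :: "('v \<Rightarrow> 'v \<Rightarrow> bool) \<Rightarrow> ('v \<Rightarrow> bool) \<Rightarrow> 'v \<Rightarrow> 'v \<Rightarrow> bool" where
  "in_cluster E \<omega> u v \<longleftrightarrow> (\<exists>xs. is_walk E xs \<and> hd xs = v \<and> last xs = u \<and> (\<forall>x\<in>set xs. \<omega> x))"

definition tau :: "('v \<Rightarrow> 'v \<Rightarrow> bool) \<Rightarrow> real \<Rightarrow> 'v \<Rightarrow> 'v \<Rightarrow> real" where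
  "tau E p u v = measure (perc p) {\<omega> \<in> space (perc p). in_cluster E \<omega> u v}"

end

theory Submission
  imports Defs
begin


lemma perc_pps:
  shows "product_prob_space (\<lambda>_. measure_pmf (bernoulli_pmf p))"
  by (simp add: product_prob_space_def product_prob_space_axioms_def product_sigma_finite_def
      prob_space_measure_pmf prob_space_imp_sigma_finite)

lemma perc_prob: "prob_space (perc p)"
proof -
  interpret product_prob_space "\<lambda>_. measure_pmf (bernoulli_pmf p)" "UNIV :: 'v set"
    by (rule perc_pps)
  show ?thesis unfolding perc_def by (rule P.prob_space_axioms)
qed

lemma perc_event:
  fixes X :: "'v set"
  assumes "finite X" "0 \<le> p" "p \<le> 1"
  shows "{\<omega>\<in>space (perc p). \<forall>x\<in>X. \<omega> x} \<in> sets (perc p)"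
    and "measure (perc p) {\<omega>\<in>space (perc p). \<forall>x\<in>X. \<omega> x} = p ^ card X"
proof -
  interpret product_prob_space "\<lambda>_. measure_pmf (bernoulli_pmf p)" "UNIV :: 'v set"
    by (rule perc_pps)
  have eq: "{\<omega>\<in>space (perc p). \<forall>x\<in>X. \<omega> x} =
     prod_emb UNIV (\<lambda>_. measure_pmf (bernoulli_pmf p)) X (Pi\<^sub>E X (\<lambda>_. {True}))"
    by (auto simp: perc_def prod_emb_def space_PiM PiE_iff fun_eq_iff restrict_def split: if_splits)
  show "{\<omega>\<in>space (perc p). \<forall>x\<in>X. \<omega> x} \<in> sets (perc p)"
    unfolding eq unfolding perc_def
    by (intro measurable_prod_emb sets_PiM_I_finite) (auto simp: assms)
  have "emeasure (perc p) {\<omega>\<in>space (perc p). \<forall>x\<in>X. \<omega> x} = (\<Prod>i\<in>X. emeasure (measure_pmf (bernoulli_pmf p)) {True})"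
    unfolding eq unfolding perc_def by (rule emeasure_PiM_emb) (auto simp: assms)
  also have "\<dots> = (\<Prod>i\<in>X. ennreal p)"
    using assms by (simp add: emeasure_pmf_single)
  also have "\<dots> = ennreal (p ^ card X)"
    using assms by (simp add: ennreal_power)
  finally show "measure (perc p) {\<omega>\<in>space (perc p). \<forall>x\<in>X. \<omega> x} = p ^ card X"
    using assms by (simp add: measure_def)
qed



definition succs :: "('v \<Rightarrow> 'v \<Rightarrow> bool) \<Rightarrow> 'v \<times> 'v \<Rightarrow> ('v \<times> 'v) set" where
  "succs E a = {b \<in> arcs E. fst b = snd a \<and> snd b \<noteq> fst a}"

lemma hash_apply_succs: "hash_apply E f a = sum f (succs E a)"
  by (simp add: hash_apply_def succs_def)

locale gbd =
  fixes E :: "'v \<Rightarrow> 'v \<Rightarrow> bool" and D :: nat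
  assumes sym: "\<And>x y. E x y \<Longrightarrow> E y x" and fin: "\<And>x. finite (nbrs E x)"
    and bd: "\<And>x. card (nbrs E x) \<le> D"
begin

abbreviation "H \<equiv> hash_apply E"
abbreviation "L2 f \<equiv> (\<lambda>a. (f a)\<^sup>2) summable_on arcs E"
abbreviation "nrm \<equiv> l2norm_arcs E"

lemma succs_sub: "succs E a \<subseteq> Pair (snd a) ` nbrs E (snd a)"
  by (auto simp: succs_def arcs_def nbrs_def image_iff)

lemma finite_succs: "finite (succs E a)"
  using succs_sub fin finite_subset by blast

lemma card_succs: "card (succs E a) \<le> D"
proof -
  have "card (succs E a) \<le> card (Pair (snd a) ` nbrs E (snd a))"
    by (rule card_mono) (use succs_sub fin in auto)
  also have "\<dots> \<le> card (nbrs E (snd a))" by (rule card_image_le) (use fin in auto)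
  finally show ?thesis using bd order_trans by blast
qed

lemma pred_sub: "{a \<in> arcs E. b \<in> succs E a} \<subseteq> (\<lambda>w. (w, fst b)) ` nbrs E (fst b)"
  by (auto simp: succs_def arcs_def nbrs_def image_iff intro: sym)

lemma card_pred: "finite F \<Longrightarrow> F \<subseteq> arcs E \<Longrightarrow> card {a\<in>F. b \<in> succs E a} \<le> D"
proof -
  assume F: "finite F" "F \<subseteq> arcs E"
  have "{a\<in>F. b \<in> succs E a} \<subseteq> (\<lambda>w. (w, fst b)) ` nbrs E (fst b)"
    using pred_sub[of b] F by blast
  then have "card {a\<in>F. b \<in> succs E a} \<le> card ((\<lambda>w. (w, fst b)) ` nbrs E (fst b))"
    by (rule card_mono[rotated]) (use fin in auto)
  also have "\<dots> \<le> card (nbrs E (fst b))" by (rule card_image_le) (use fin in auto)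
  finally show ?thesis using bd order_trans by blast
qed

lemma H_sq_le: "(H f a)\<^sup>2 \<le> real D * (\<Sum>b\<in>succs E a. (f b)\<^sup>2)"
proof -
  have "(H f a)\<^sup>2 \<le> (\<Sum>b\<in>succs E a. (f b)\<^sup>2) * card (succs E a)"
    unfolding hash_apply_succs by (rule sum_squared_le_sum_of_squares)
  also have "\<dots> \<le> (\<Sum>b\<in>succs E a. (f b)\<^sup>2) * real D"
    by (rule mult_left_mono) (use card_succs in \<open>auto intro: sum_nonneg\<close>)
  finally show ?thesis by (simp add: mult.commute)
qed

lemma H_fin_bound:
  assumes f: "L2 f" and F: "finite F" "F \<subseteq> arcs E"
  shows "(\<Sum>a\<in>F. (H f a)\<^sup>2) \<le> (real D)\<^sup>2 * infsum (\<lambda>a. (f a)\<^sup>2) (arcs E)"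
proof -
  define G where "G = (\<Union>a\<in>F. succs E a)"
  have G: "finite G" "G \<subseteq> arcs E" using F finite_succs by (auto simp: G_def succs_def)
  have "(\<Sum>a\<in>F. (H f a)\<^sup>2) \<le> (\<Sum>a\<in>F. real D * (\<Sum>b\<in>succs E a. (f b)\<^sup>2))"
    by (rule sum_mono) (rule H_sq_le)
  also have "\<dots> = real D * (\<Sum>a\<in>F. (\<Sum>b\<in>{b. b \<in> G \<and> b \<in> succs E a}. (f b)\<^sup>2))"
    by (simp add: sum_distrib_left G_def) (rule sum.cong; auto intro!: sum.cong)
  also have "\<dots> = real D * (\<Sum>b\<in>G. (\<Sum>a\<in>{a. a \<in> F \<and> b \<in> succs E a}. (f b)\<^sup>2))"
    by (subst sum.swap_restrict) (use F G in auto)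
  also have "\<dots> = real D * (\<Sum>b\<in>G. (f b)\<^sup>2 * card {a\<in>F. b \<in> succs E a})"
    by (simp add: mult.commute)
  also have "\<dots> \<le> real D * (\<Sum>b\<in>G. (f b)\<^sup>2 * real D)"
    by (intro mult_left_mono sum_mono) (use card_pred F in auto)
  also have "\<dots> = (real D)\<^sup>2 * (\<Sum>b\<in>G. (f b)\<^sup>2)"
    by (simp add: sum_distrib_left sum_distrib_right power2_eq_square mult_ac)
  also have "\<dots> \<le> (real D)\<^sup>2 * infsum (\<lambda>a. (f a)\<^sup>2) (arcs E)"
    by (intro mult_left_mono finite_sum_le_infsum) (use f G in auto)
  finally show ?thesis .
qed

lemma H_L2:
  assumes f: "L2 f"
  shows "L2 (H f)" "infsum (\<lambda>a. (H f a)\<^sup>2) (arcs E) \<le> (real D)\<^sup>2 * infsum (\<lambda>a. (f a)\<^sup>2) (arcs E)"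
proof -
  show s: "L2 (H f)"
    by (rule nonneg_bdd_above_summable_on) (auto intro!: bdd_aboveI H_fin_bound[OF f])
  show "infsum (\<lambda>a. (H f a)\<^sup>2) (arcs E) \<le> (real D)\<^sup>2 * infsum (\<lambda>a. (f a)\<^sup>2) (arcs E)"
    by (rule infsum_le_finite_sums[OF s]) (rule H_fin_bound[OF f])
qed

lemma nrm_nonneg: "0 \<le> nrm f"
  by (simp add: l2norm_arcs_def infsum_nonneg)

lemma H_nrm: "L2 f \<Longrightarrow> nrm (H f) \<le> real D * nrm f"
proof -
  assume f: "L2 f"
  have "nrm (H f) \<le> sqrt ((real D)\<^sup>2 * infsum (\<lambda>a. (f a)\<^sup>2) (arcs E))"
    unfolding l2norm_arcs_def using H_L2(2)[OF f] by simp
  also have "\<dots> = real D * nrm f" by (simp add: l2norm_arcs_def real_sqrt_mult)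
  finally show ?thesis .
qed

lemma HP_L2: "L2 f \<Longrightarrow> L2 ((H ^^ m) f) \<and> nrm ((H ^^ m) f) \<le> real D ^ m * nrm f"
proof (induction m)
  case 0 then show ?case by simp
next
  case (Suc m)
  then have a: "L2 ((H ^^ m) f)" and b: "nrm ((H ^^ m) f) \<le> real D ^ m * nrm f" by auto
  have "nrm ((H ^^ Suc m) f) \<le> real D * nrm ((H ^^ m) f)" using H_nrm[OF a] by simp
  also have "\<dots> \<le> real D * (real D ^ m * nrm f)" by (rule mult_left_mono[OF b]) simp
  finally show ?case using H_L2(1)[OF a] by simp
qed

lemma H_scale: "H (\<lambda>a. c * f a) = (\<lambda>a. c * H f a)"
  by (rule ext) (simp add: hash_apply_def sum_distrib_left)

lemma HP_scale: "(H ^^ m) (\<lambda>a. c * f a) = (\<lambda>a. c * (H ^^ m) f a)"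
  by (induction m) (simp_all add: H_scale)

lemma nrm_scale: "nrm (\<lambda>a. c * f a) = \<bar>c\<bar> * nrm f"
proof -
  have "infsum (\<lambda>a. (c * f a)\<^sup>2) (arcs E) = c\<^sup>2 * infsum (\<lambda>a. (f a)\<^sup>2) (arcs E)"
    by (simp add: power_mult_distrib infsum_cmult_right')
  then show ?thesis by (simp add: l2norm_arcs_def real_sqrt_mult)
qed

abbreviation "h \<equiv> hash_pow_norm E"

lemma NS_bdd: "bdd_above {nrm ((H ^^ m) f) | f. L2 f \<and> nrm f \<le> 1}"
proof (rule bdd_aboveI)
  fix x assume "x \<in> {nrm ((H ^^ m) f) | f. L2 f \<and> nrm f \<le> 1}"
  then obtain f where f: "L2 f" "nrm f \<le> 1" and x: "x = nrm ((H ^^ m) f)" by auto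
  have "x \<le> real D ^ m * nrm f" using HP_L2[OF f(1)] x by simp
  also have "\<dots> \<le> real D ^ m * 1" by (rule mult_left_mono[OF f(2)]) simp
  finally show "x \<le> real D ^ m" by simp
qed

lemma L2_0: "L2 (\<lambda>_. 0::real)" by simp
lemma nrm_0: "nrm (\<lambda>_. 0::real) = 0" by (simp add: l2norm_arcs_def)

lemma NS_ne: "{nrm ((H ^^ m) f) | f. L2 f \<and> nrm f \<le> 1} \<noteq> {}"
  using L2_0 nrm_0 by fastforce

lemma h_upper: "L2 f \<Longrightarrow> nrm f \<le> 1 \<Longrightarrow> nrm ((H ^^ m) f) \<le> h m"
  unfolding hash_pow_norm_def by (rule cSup_upper[OF _ NS_bdd]) auto

lemma h_nonneg: "0 \<le> h m"
proof -
  have "nrm ((H ^^ m) (\<lambda>_. 0::real)) \<le> h m" by (rule h_upper[OF L2_0]) (simp add: nrm_0)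
  then show ?thesis by (meson nrm_nonneg order_trans)
qed

lemma h_main:
  assumes g: "L2 g" shows "nrm ((H ^^ m) g) \<le> h m * nrm g"
proof (cases "nrm g = 0")
  case True
  then show ?thesis using HP_L2[OF g, of m] nrm_nonneg[of "(H ^^ m) g"] by simp
next
  case False
  define c where "c = nrm g"
  have c: "c > 0" using False nrm_nonneg[of g] by (simp add: c_def)
  have L: "L2 (\<lambda>a. (1/c) * g a)"
    unfolding power_mult_distrib by (rule summable_on_cmult_right[OF g])
  have n0: "nrm (\<lambda>a. (1/c) * g a) = \<bar>1/c\<bar> * nrm g" by (rule nrm_scale)
  have n: "nrm (\<lambda>a. (1/c) * g a) \<le> 1" unfolding n0 using c by (simp add: c_def)
  have "nrm ((H ^^ m) (\<lambda>a. (1/c) * g a)) \<le> h m" by (rule h_upper[OF L n])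
  moreover have "nrm ((H ^^ m) (\<lambda>a. (1/c) * g a)) = \<bar>1/c\<bar> * nrm ((H ^^ m) g)"
    unfolding HP_scale by (rule nrm_scale)
  ultimately have "(1/c) * nrm ((H ^^ m) g) \<le> h m" using c by simp
  then show ?thesis using c by (simp add: c_def field_simps)
qed

lemma h_submult: "h (m + n) \<le> h m * h n"
  unfolding hash_pow_norm_def[of E "m+n"]
proof (rule cSup_least[OF NS_ne])
  fix x assume "x \<in> {nrm ((H ^^ (m+n)) f) | f. L2 f \<and> nrm f \<le> 1}"
  then obtain f where f: "L2 f" "nrm f \<le> 1" and x: "x = nrm ((H ^^ (m+n)) f)" by auto
  have "x = nrm ((H ^^ m) ((H ^^ n) f))" by (simp add: x funpow_add)
  also have "\<dots> \<le> h m * nrm ((H ^^ n) f)" by (rule h_main) (use HP_L2[OF f(1)] in auto)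
  also have "\<dots> \<le> h m * h n" by (rule mult_left_mono[OF h_upper[OF f] h_nonneg])
  finally show "x \<le> h m * h n" .
qed

lemma h_0: "h 0 \<le> 1"
  unfolding hash_pow_norm_def by (rule cSup_least[OF NS_ne]) auto

end



lemma fek_bound:
  fixes h :: "nat \<Rightarrow> real"
  assumes nn: "\<And>n. 0 \<le> h n" and sm: "\<And>m n. h (m + n) \<le> h m * h n" and h0: "h 0 \<le> 1"
    and k: "k \<ge> 1" and s: "s > 0" and hk: "h k powr (1 / real k) \<le> s"
  shows "\<exists>K>0. \<forall>n. h n \<le> K * s ^ n"
proof -
  have hks: "h k \<le> s ^ k"
  proof -
    have "h k = (h k powr (1 / real k)) ^ k"
    proof (cases "h k = 0")
      case True then show ?thesis using k by simp
    next
      case False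
      then have hp: "h k > 0" using nn[of k] by simp
      have "(h k powr (1 / real k)) ^ k = (h k powr (1 / real k)) powr (real k)"
        using hp by (simp add: powr_realpow)
      also have "\<dots> = h k" using k hp by (simp add: powr_powr)
      finally show ?thesis by simp
    qed
    also have "\<dots> \<le> s ^ k" by (rule power_mono[OF hk]) simp
    finally show ?thesis .
  qed
  define B where "B = max 1 (h 1)"
  have B: "B \<ge> 1" "h 1 \<le> B" by (auto simp: B_def)
  have hB: "h r \<le> B ^ r" for r
  proof (induction r)
    case 0 then show ?case using h0 by simp
  next
    case (Suc r)
    have "h (Suc r) \<le> h 1 * h r" using sm[of 1 r] by simp
    also have "\<dots> \<le> B * B ^ r" by (rule mult_mono) (use B Suc nn in auto)
    finally show ?case by simp
  qed
  have hq: "h (q * k + r) \<le> (s ^ k) ^ q * B ^ r" for q r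
  proof (induction q)
    case 0 then show ?case using hB by simp
  next
    case (Suc q)
    have "h (Suc q * k + r) = h (k + (q * k + r))" by (simp add: algebra_simps)
    also have "\<dots> \<le> h k * h (q * k + r)" by (rule sm)
    also have "\<dots> \<le> s ^ k * ((s ^ k) ^ q * B ^ r)"
      by (rule mult_mono) (use hks Suc nn s in auto)
    finally show ?case by (simp add: mult_ac)
  qed
  define M where "M = max 1 (B / s)"
  have M: "M \<ge> 1" "B / s \<le> M" by (auto simp: M_def)
  show ?thesis
  proof (intro exI[of _ "M ^ k"] conjI allI)
    show "M ^ k > 0" using M by simp
    fix n
    define q r where "q = n div k" and "r = n mod k"
    have n: "n = q * k + r" by (simp add: q_def r_def)
    have rk: "r \<le> k" using k by (simp add: r_def less_imp_le)
    have "h n \<le> (s ^ k) ^ q * B ^ r" using hq n by simp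
    also have "\<dots> = s ^ n * (B / s) ^ r"
      using s by (simp add: n power_add power_mult power_divide field_simps mult.commute)
    also have "\<dots> \<le> s ^ n * M ^ r"
      by (intro mult_left_mono power_mono) (use M s B in auto)
    also have "\<dots> \<le> s ^ n * M ^ k"
      by (intro mult_left_mono power_increasing) (use M s rk in auto)
    finally show "h n \<le> M ^ k * s ^ n" by (simp add: mult.commute)
  qed
qed

lemma fek_lim:
  fixes h :: "nat \<Rightarrow> real"
  assumes nn: "\<And>n. 0 \<le> h n" and sm: "\<And>m n. h (m + n) \<le> h m * h n" and h0: "h 0 \<le> 1"
  defines "L \<equiv> Inf {h k powr (1 / real k) | k. k \<ge> 1}"
  shows "(\<lambda>n. h n powr (1 / real n)) \<longlonglongrightarrow> L" and "L \<ge> 0"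
proof -
  let ?S = "{h k powr (1 / real k) | k. k \<ge> 1}"
  have ne: "?S \<noteq> {}" by auto
  have bb: "bdd_below ?S" by (rule bdd_belowI[of _ 0]) auto
  have low: "L \<le> h n powr (1 / real n)" if "n \<ge> 1" for n
    unfolding L_def by (rule cInf_lower[OF _ bb]) (use that in auto)
  show L0: "L \<ge> 0" unfolding L_def by (rule cInf_greatest[OF ne]) auto
  show "(\<lambda>n. h n powr (1 / real n)) \<longlonglongrightarrow> L"
  proof (rule order_tendstoI)
    fix y assume yL: "y < L"
    show "\<forall>\<^sub>F n in sequentially. y < h n powr (1 / real n)"
      using eventually_ge_at_top[of 1]
    proof eventually_elim
      case (elim n) then show ?case using low[of n] yL by linarith
    qed
  next
    fix y assume y: "L < y"
    define s where "s = (L + y) / 2"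
    have s: "L < s" "s < y" "s > 0" using y L0 by (auto simp: s_def)
    obtain x where "x \<in> ?S" "x < s" using cInf_lessD[OF ne, of s] s unfolding L_def by auto
    then obtain k where k: "k \<ge> 1" "h k powr (1 / real k) \<le> s" by auto
    obtain K where K: "K > 0" "\<And>n. h n \<le> K * s ^ n"
      using fek_bound[OF nn sm h0 k(1) s(3) k(2)] by blast
    have lim: "(\<lambda>n. K powr (1 / real n) * s) \<longlonglongrightarrow> K powr 0 * s"
      by (intro tendsto_intros lim_1_over_n) (use K in auto)
    then have "\<forall>\<^sub>F n in sequentially. K powr (1 / real n) * s < y"
      using s K by (intro order_tendstoD(2)[OF lim]) auto
    then show "\<forall>\<^sub>F n in sequentially. h n powr (1 / real n) < y"
      using eventually_ge_at_top[of 1]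
    proof eventually_elim
      case (elim n)
      have "h n powr (1 / real n) \<le> (K * s ^ n) powr (1 / real n)"
        by (rule powr_mono2) (use nn K elim in auto)
      also have "\<dots> = K powr (1 / real n) * s"
        using K s elim by (simp add: powr_mult powr_realpow[symmetric] powr_powr)
      finally show ?case using elim by simp
    qed
  qed
qed

lemma fek_key:
  fixes h :: "nat \<Rightarrow> real"
  assumes nn: "\<And>n. 0 \<le> h n" and sm: "\<And>m n. h (m + n) \<le> h m * h n" and h0: "h 0 \<le> 1"
    and p: "0 \<le> p" "p < 1 / lim (\<lambda>n. h n powr (1 / real n))"
  shows "\<exists>s K. 0 < s \<and> p * s < 1 \<and> 0 < K \<and> (\<forall>n. h n \<le> K * s ^ n)"
proof -
  define L where "L = Inf {h k powr (1 / real k) | k. k \<ge> 1}"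
  let ?S = "{h k powr (1 / real k) | k. k \<ge> 1}"
  have ne: "?S \<noteq> {}" by auto
  have lim: "lim (\<lambda>n. h n powr (1 / real n)) = L"
    using fek_lim(1)[OF nn sm h0] by (simp add: limI L_def)
  have L0: "L \<ge> 0" using fek_lim(2)[OF nn sm h0] by (simp add: L_def)
  have Lpos: "L > 0" using p lim L0 by (cases "L = 0") auto
  have pL: "p < 1 / L" using p lim by simp
  define t where "t = (if p = 0 then L + 1 else (L + 1 / p) / 2)"
  have Lp: "0 \<le> L * p" using Lpos p(1) by simp
  have Lp1: "L < 1 / p" if "p \<noteq> 0"
  proof -
    have "p > 0" using that p(1) by simp
    then show ?thesis using pL Lpos by (simp add: field_simps)
  qed
  have t1: "L < t" unfolding t_def using Lp1 by auto
  have t3: "p * t < 1"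
  proof (cases "p = 0")
    case True then show ?thesis by simp
  next
    case False
    then have pp: "p > 0" using p(1) by simp
    have "L < 1 / p" using pL Lpos pp by (simp add: field_simps)
    then have "t < 1 / p" unfolding t_def using False by auto
    then have "p * t < p * (1 / p)" using pp by (intro mult_strict_left_mono) auto
    then show ?thesis using pp by simp
  qed
  have t: "L < t" "t > 0" "p * t < 1" using t1 t3 Lpos by auto
  obtain x where "x \<in> ?S" "x < t" using cInf_lessD[OF ne, of t] t unfolding L_def by auto
  then obtain k where k: "k \<ge> 1" "h k powr (1 / real k) \<le> t" by auto
  obtain K where K: "K > 0" "\<And>n. h n \<le> K * t ^ n"
    using fek_bound[OF nn sm h0 k(1) t(2) k(2)] by blast
  show ?thesis using t K by blast
qed



fun nbw :: "'v list \<Rightarrow> bool" where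
  "nbw (x # y # z # zs) = (z \<noteq> x \<and> nbw (y # z # zs))"
| "nbw _ = True"

lemma distinct_nbw: "distinct xs \<Longrightarrow> nbw xs"
  by (induction xs rule: nbw.induct) auto

lemma is_walk_Cons2: "is_walk E (x # y # zs) \<longleftrightarrow> E x y \<and> is_walk E (y # zs)"
  by (simp add: is_walk_def)

definition walks_from :: "('v \<Rightarrow> 'v \<Rightarrow> bool) \<Rightarrow> 'v \<Rightarrow> nat \<Rightarrow> 'v list set" where
  "walks_from E v k = {xs. is_walk E xs \<and> hd xs = v \<and> length xs = Suc k}"

context gbd begin

lemma finite_walks_from: "finite (walks_from E v k)"
proof (induction k arbitrary: v)
  case 0
  have "walks_from E v 0 \<subseteq> {[v]}"
    by (auto simp: walks_from_def length_Suc_conv)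
  then show ?case using finite_subset by blast
next
  case (Suc k)
  have "walks_from E v (Suc k) \<subseteq> Cons v ` (\<Union>y\<in>nbrs E v. walks_from E y k)"
  proof
    fix xs assume "xs \<in> walks_from E v (Suc k)"
    then obtain y zs where xs: "xs = v # y # zs" "E v y" "is_walk E (y # zs)" "length zs = k"
      by (auto simp: walks_from_def length_Suc_conv is_walk_Cons2)
    then show "xs \<in> Cons v ` (\<Union>y\<in>nbrs E v. walks_from E y k)"
      by (auto simp: walks_from_def nbrs_def)
  qed
  moreover have "finite (Cons v ` (\<Union>y\<in>nbrs E v. walks_from E y k))"
    using Suc fin by auto
  ultimately show ?case using finite_subset by blast
qed

definition W :: "'v \<Rightarrow> nat \<Rightarrow> 'v \<times> 'v \<Rightarrow> 'v list set" where
  "W u m a = {xs. is_walk E xs \<and> nbw xs \<and> length xs = m + 2 \<and> hd xs = fst a \<and> hd (tl xs) = snd a \<and> last xs = u}"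

definition fu :: "'v \<Rightarrow> 'v \<times> 'v \<Rightarrow> real" where
  "fu u b = (if snd b = u then 1 else 0)"

lemma finite_W: "finite (W u m a)"
proof -
  have "W u m a \<subseteq> walks_from E (fst a) (Suc m)" by (auto simp: W_def walks_from_def)
  then show ?thesis using finite_walks_from finite_subset by blast
qed

lemma HP_fu_nonneg: "0 \<le> (H ^^ m) (fu u) a"
  by (induction m arbitrary: a) (auto simp: fu_def hash_apply_def intro: sum_nonneg)

lemma card_W: "real (card (W u m a)) \<le> (H ^^ m) (fu u) a"
proof (induction m arbitrary: a)
  case 0
  have sub: "W u 0 a \<subseteq> (if snd a = u then {[fst a, snd a]} else {})"
  proof
    fix xs assume "xs \<in> W u 0 a"
    then show "xs \<in> (if snd a = u then {[fst a, snd a]} else {})"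
      by (cases xs; cases "tl xs"; auto simp: W_def)
  qed
  have "card (W u 0 a) \<le> card (if snd a = u then {[fst a, snd a]} else {})"
    by (rule card_mono[OF _ sub]) simp
  then show ?case by (auto simp: fu_def split: if_splits)
next
  case (Suc m)
  have sub: "W u (Suc m) a \<subseteq> Cons (fst a) ` (\<Union>b\<in>succs E a. W u m b)"
  proof
    fix xs assume A: "xs \<in> W u (Suc m) a"
    then obtain x y z zs where xs: "xs = x # y # z # zs"
      by (cases xs; cases "tl xs"; cases "tl (tl xs)"; auto simp: W_def)
    have b: "(y, z) \<in> succs E a" using A xs by (auto simp: W_def succs_def arcs_def is_walk_Cons2)
    have m: "y # z # zs \<in> W u m (y, z)" using A xs by (auto simp: W_def is_walk_Cons2)
    have "xs = fst a # (y # z # zs)" using A xs by (auto simp: W_def)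
    then show "xs \<in> Cons (fst a) ` (\<Union>b\<in>succs E a. W u m b)"
      using b m by blast
  qed
  have "card (W u (Suc m) a) \<le> card (Cons (fst a) ` (\<Union>b\<in>succs E a. W u m b))"
    by (rule card_mono[OF _ sub]) (use finite_succs finite_W in auto)
  also have "\<dots> \<le> card (\<Union>b\<in>succs E a. W u m b)" by (rule card_image_le) (use finite_succs finite_W in auto)
  also have "\<dots> \<le> (\<Sum>b\<in>succs E a. card (W u m b))" by (rule card_UN_le[OF finite_succs])
  finally have "real (card (W u (Suc m) a)) \<le> (\<Sum>b\<in>succs E a. real (card (W u m b)))"
    by (metis of_nat_le_iff of_nat_sum)
  also have "\<dots> \<le> (\<Sum>b\<in>succs E a. (H ^^ m) (fu u) b)" by (rule sum_mono) (rule Suc)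
  also have "\<dots> = (H ^^ Suc m) (fu u) a" by (simp add: hash_apply_succs)
  finally show ?case .
qed

lemma fu_support: "{b \<in> arcs E. snd b = u} \<subseteq> (\<lambda>w. (w, u)) ` nbrs E u"
  by (auto simp: arcs_def nbrs_def image_iff intro: sym)

lemma fu_L2: "L2 (fu u)" and fu_nrm: "nrm (fu u) \<le> sqrt (real D)"
proof -
  let ?S = "{b \<in> arcs E. snd b = u}"
  have finS: "finite ?S" using fu_support fin finite_subset by blast
  have cS: "card ?S \<le> D"
  proof -
    have "card ?S \<le> card ((\<lambda>w. (w, u)) ` nbrs E u)" by (rule card_mono[OF _ fu_support]) (use fin in auto)
    also have "\<dots> \<le> card (nbrs E u)" by (rule card_image_le) (use fin in auto)
    finally show ?thesis using bd order_trans by blast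
  qed
  have eq: "(\<lambda>a. (fu u a)\<^sup>2) summable_on arcs E \<longleftrightarrow> (\<lambda>a. 1::real) summable_on ?S"
    by (rule summable_on_cong_neutral) (auto simp: fu_def)
  show "L2 (fu u)" using eq finS by simp
  have "infsum (\<lambda>a. (fu u a)\<^sup>2) (arcs E) = infsum (\<lambda>a. 1::real) ?S"
    by (rule infsum_cong_neutral) (auto simp: fu_def)
  also have "\<dots> = real (card ?S)" using finS by simp
  also have "\<dots> \<le> real D" using cS by simp
  finally show "nrm (fu u) \<le> sqrt (real D)" by (simp add: l2norm_arcs_def)
qed

lemma entry_le_nrm:
  assumes g: "L2 g" and a: "a \<in> arcs E" shows "g a \<le> nrm g"
proof -
  have "(g a)\<^sup>2 \<le> infsum (\<lambda>a. (g a)\<^sup>2) (arcs E)"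
    using finite_sum_le_infsum[OF g, of "{a}"] a by simp
  then have "g a \<le> sqrt (infsum (\<lambda>a. (g a)\<^sup>2) (arcs E))" by (rule real_le_rsqrt)
  then show ?thesis by (simp add: l2norm_arcs_def)
qed

definition P :: "'v \<Rightarrow> 'v \<Rightarrow> nat \<Rightarrow> 'v list set" where
  "P u v n = {xs. is_walk E xs \<and> distinct xs \<and> hd xs = v \<and> last xs = u \<and> length xs = Suc n}"

lemma finite_P: "finite (P u v n)"
proof -
  have "P u v n \<subseteq> walks_from E v n" by (auto simp: P_def walks_from_def)
  then show ?thesis using finite_walks_from finite_subset by blast
qed

lemma card_P:
  assumes n: "n \<ge> 1"
  shows "real (card (P u v n)) \<le> real D * sqrt (real D) * h (n - 1)"
proof -
  have sub: "P u v n \<subseteq> (\<Union>y\<in>nbrs E v. W u (n - 1) (v, y))"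
  proof
    fix xs assume A: "xs \<in> P u v n"
    then obtain x y zs where xs: "xs = x # y # zs"
      using n by (cases xs; cases "tl xs"; auto simp: P_def)
    then show "xs \<in> (\<Union>y\<in>nbrs E v. W u (n - 1) (v, y))"
      using A n by (auto simp: P_def W_def nbrs_def is_walk_Cons2 distinct_nbw)
  qed
  have "card (P u v n) \<le> card (\<Union>y\<in>nbrs E v. W u (n - 1) (v, y))"
    by (rule card_mono[OF _ sub]) (use fin finite_W in auto)
  also have "\<dots> \<le> (\<Sum>y\<in>nbrs E v. card (W u (n - 1) (v, y)))" by (rule card_UN_le[OF fin])
  finally have "real (card (P u v n)) \<le> (\<Sum>y\<in>nbrs E v. real (card (W u (n - 1) (v, y))))"
    by (metis of_nat_le_iff of_nat_sum)
  also have "\<dots> \<le> (\<Sum>y\<in>nbrs E v. sqrt (real D) * h (n - 1))"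
  proof (rule sum_mono)
    fix y assume y: "y \<in> nbrs E v"
    have L: "L2 ((H ^^ (n - 1)) (fu u))" using HP_L2[OF fu_L2] by blast
    have "real (card (W u (n - 1) (v, y))) \<le> (H ^^ (n - 1)) (fu u) (v, y)" by (rule card_W)
    also have "\<dots> \<le> nrm ((H ^^ (n - 1)) (fu u))"
      by (rule entry_le_nrm[OF L]) (use y in \<open>auto simp: arcs_def nbrs_def\<close>)
    also have "\<dots> \<le> h (n - 1) * nrm (fu u)" by (rule h_main[OF fu_L2])
    also have "\<dots> \<le> h (n - 1) * sqrt (real D)" by (rule mult_left_mono[OF fu_nrm h_nonneg])
    finally show "real (card (W u (n - 1) (v, y))) \<le> sqrt (real D) * h (n - 1)" by (simp add: mult.commute)
  qed
  also have "\<dots> = real (card (nbrs E v)) * (sqrt (real D) * h (n - 1))" by simp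
  also have "\<dots> \<le> real D * (sqrt (real D) * h (n - 1))"
    by (rule mult_right_mono) (use bd h_nonneg in auto)
  finally show ?thesis by (simp add: mult_ac)
qed

end



lemma distinct_walk:
  "is_walk E xs \<Longrightarrow> \<exists>ys. is_walk E ys \<and> distinct ys \<and> hd ys = hd xs \<and> last ys = last xs \<and> set ys \<subseteq> set xs"
proof (induction xs rule: length_induct)
  case (1 xs)
  show ?case
  proof (cases "distinct xs")
    case True then show ?thesis using 1 by blast
  next
    case False
    then obtain as y bs cs where xs: "xs = as @ [y] @ bs @ [y] @ cs" using not_distinct_decomp by blast
    let ?ys = "as @ [y] @ cs"
    have aux: "successively E (y # cs)" if "successively E (y # bs @ y # cs)"
      using that successively_append_iff[of E "y # bs" "y # cs"] by simp
    have w: "is_walk E ?ys" using "1.prems" aux unfolding xs is_walk_def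
      by (auto simp: successively_append_iff)
    have l: "length ?ys < length xs" by (simp add: xs)
    obtain zs where "is_walk E zs \<and> distinct zs \<and> hd zs = hd ?ys \<and> last zs = last ?ys \<and> set zs \<subseteq> set ?ys"
      using "1.IH" l w by blast
    moreover have "hd ?ys = hd xs" "last ?ys = last xs" "set ?ys \<subseteq> set xs"
      by (auto simp: xs hd_append)
    ultimately show ?thesis by auto
  qed
qed

lemma walk_rev:
  assumes "\<forall>x y. E x y \<longrightarrow> E y x" "is_walk E xs" shows "is_walk E (rev xs)"
  using assms unfolding is_walk_def by (auto simp: successively_rev elim: successively_mono)

theorem theorem2:
  fixes E :: "'v \<Rightarrow> 'v \<Rightarrow> bool" and p :: real
  assumes "infinite (UNIV :: 'v set)"
    and "\<forall>x y. E x y \<longrightarrow> E y x"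
    and "\<forall>x. \<not> E x x"
    and "graph_connected E"
    and "\<exists>D::nat. \<forall>x. finite (nbrs E x) \<and> card (nbrs E x) \<le> D"
    and "0 \<le> p" and "p \<le> 1"
    and "p < 1 / hash_rho E"
  shows "\<exists>\<rho>' C. 0 \<le> \<rho>' \<and> \<rho>' < 1 \<and> C \<ge> real (dmax E) / (1 - p * hash_rho E) \<and>
           (\<forall>u v. tau E p u v \<le> C * \<rho>' ^ gdist E u v)"
proof -
  obtain D where D: "\<forall>x. finite (nbrs E x) \<and> card (nbrs E x) \<le> D" using assms(5) by blast
  interpret gbd E D by unfold_locales (use assms(2) D in auto)
  interpret Pp: prob_space "perc p" by (rule perc_prob)
  have hl: "hash_rho E = lim (\<lambda>m. h m powr (1 / real m))" by (simp add: hash_rho_def)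
  obtain s K where sK: "0 < s" "p * s < 1" "0 < K" "\<And>n. h n \<le> K * s ^ n"
    using fek_key[of h p, OF h_nonneg h_submult h_0 assms(6)] assms(8) hl by auto
  define r where "r = max (p * s) (1/2)"
  have r: "0 < r" "r < 1" "p * s \<le> r" using sK by (auto simp: r_def)
  define c1 where "c1 = real D * sqrt (real D) * K / r"
  have c1: "c1 \<ge> 0" using sK r by (simp add: c1_def)
  define C where "C = max (max 1 (real (dmax E) / (1 - p * hash_rho E))) (c1 / (1 - r))"
  have C: "C \<ge> 1" "C \<ge> c1 / (1 - r)" "C \<ge> real (dmax E) / (1 - p * hash_rho E)"
    by (auto simp: C_def)
  have key: "tau E p u v \<le> C * r ^ gdist E u v" for u v
  proof (cases "gdist E u v = 0")
    case True
    have "tau E p u v \<le> 1" unfolding tau_def by (rule Pp.prob_le_1)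
    then show ?thesis using True C by simp
  next
    case False
    define d where "d = gdist E u v"
    have d: "d \<ge> 1" using False by (simp add: d_def)
    define A where "A X = {\<omega>\<in>space (perc p). \<forall>x\<in>X. \<omega> x}" for X :: "'v set"
    define B where "B n = (\<Union>xs\<in>P u v n. A (set xs))" for n
    define b where "b n = (if d \<le> n then c1 * r ^ n else 0)" for n
    have Asets: "A X \<in> sets (perc p)" if "finite X" for X
      unfolding A_def by (rule perc_event(1)[OF that assms(6,7)])
    have Ameas: "measure (perc p) (A X) = p ^ card X" if "finite X" for X
      unfolding A_def by (rule perc_event(2)[OF that assms(6,7)])
    have Bsets: "B n \<in> sets (perc p)" for n
      unfolding B_def by (rule sets.finite_UN[OF finite_P]) (auto intro: Asets)
    have gd: "d \<le> n" if xs: "xs \<in> P u v n" for xs n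
    proof -
      have "is_walk E (rev xs) \<and> hd (rev xs) = u \<and> last (rev xs) = v \<and> length (rev xs) = Suc n"
        using xs walk_rev[OF assms(2)] by (auto simp: P_def hd_rev last_rev)
      then show ?thesis unfolding d_def gdist_def by (intro Least_le) blast
    qed
    have Bbound: "measure (perc p) (B n) \<le> b n" for n
    proof (cases "d \<le> n")
      case False
      then have "P u v n = {}" using gd by fastforce
      then show ?thesis using False by (simp add: B_def b_def)
    next
      case True
      then obtain m where n: "n = Suc m" using d by (cases n) auto
      have "measure (perc p) (B n) \<le> (\<Sum>xs\<in>P u v n. measure (perc p) (A (set xs)))"
        unfolding B_def by (rule Pp.finite_measure_subadditive_finite[OF finite_P]) (auto intro: Asets)
      also have "\<dots> = (\<Sum>xs\<in>P u v n. p ^ Suc n)"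
        by (rule sum.cong) (auto simp: Ameas P_def distinct_card)
      also have "\<dots> = real (card (P u v n)) * p ^ Suc n" by simp
      also have "\<dots> \<le> (real D * sqrt (real D) * (K * s ^ m)) * p ^ Suc n"
      proof (rule mult_right_mono)
        have "real (card (P u v n)) \<le> real D * sqrt (real D) * h m" using card_P[of n] n by simp
        also have "\<dots> \<le> real D * sqrt (real D) * (K * s ^ m)" by (rule mult_left_mono[OF sK(4)]) simp
        finally show "real (card (P u v n)) \<le> real D * sqrt (real D) * (K * s ^ m)" .
      qed (use assms(6) in simp)
      also have "\<dots> = real D * sqrt (real D) * K * ((p * s) ^ m * p\<^sup>2)"
        by (simp add: n power_mult_distrib power2_eq_square mult_ac)
      also have "\<dots> \<le> real D * sqrt (real D) * K * (r ^ m * 1)"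
      proof (rule mult_left_mono)
        have "(p * s) ^ m \<le> r ^ m" by (rule power_mono[OF r(3)]) (use assms(6) sK in simp)
        moreover have "p\<^sup>2 \<le> 1" using assms(6,7) by (simp add: power_le_one)
        ultimately show "(p * s) ^ m * p\<^sup>2 \<le> r ^ m * 1"
          by (intro mult_mono) (use r assms(6) in auto)
      qed (use sK in simp)
      also have "\<dots> = c1 * r ^ n" using r by (simp add: c1_def n)
      finally show ?thesis using True by (simp add: b_def)
    qed
    have bsums: "b sums (c1 * r ^ d / (1 - r))"
    proof -
      have "(\<lambda>i. c1 * r ^ d * r ^ i) sums (c1 * r ^ d * (1 / (1 - r)))"
        by (rule sums_mult[OF geometric_sums]) (use r in simp)
      moreover have "(\<lambda>i. b (i + d)) = (\<lambda>i. c1 * r ^ d * r ^ i)"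
        by (auto simp: b_def power_add mult_ac)
      ultimately have "(\<lambda>i. b (i + d)) sums (c1 * r ^ d / (1 - r))" by simp
      then show ?thesis by (subst (asm) sums_zero_iff_shift) (auto simp: b_def)
    qed
    have summB: "summable (\<lambda>n. measure (perc p) (B n))"
      by (rule summable_comparison_test[OF _ sums_summable[OF bsums]])
         (use Bbound in auto)
    have T: "{\<omega> \<in> space (perc p). in_cluster E \<omega> u v} \<subseteq> (\<Union>n. B n)"
    proof
      fix \<omega> assume "\<omega> \<in> {\<omega> \<in> space (perc p). in_cluster E \<omega> u v}"
      then obtain xs where \<omega>: "\<omega> \<in> space (perc p)" and xs: "is_walk E xs" "hd xs = v" "last xs = u" "\<forall>x\<in>set xs. \<omega> x"
        by (auto simp: in_cluster_def)
      obtain ys where ys: "is_walk E ys" "distinct ys" "hd ys = v" "last ys = u" "set ys \<subseteq> set xs"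
        using distinct_walk[OF xs(1)] xs by auto
      have ne: "ys \<noteq> []" using ys(1) by (simp add: is_walk_def)
      have "ys \<in> P u v (length ys - 1)" using ys ne by (auto simp: P_def)
      moreover have "\<omega> \<in> A (set ys)" using \<omega> xs(4) ys(5) by (auto simp: A_def)
      ultimately show "\<omega> \<in> (\<Union>n. B n)" by (auto simp: B_def)
    qed
    have "tau E p u v \<le> measure (perc p) (\<Union>n. B n)"
      unfolding tau_def by (rule Pp.finite_measure_mono[OF T]) (use Bsets in auto)
    also have "\<dots> \<le> (\<Sum>n. measure (perc p) (B n))"
      by (rule Pp.finite_measure_subadditive_countably[OF _ summB]) (use Bsets in auto)
    also have "\<dots> \<le> (\<Sum>n. b n)" by (rule suminf_le[OF Bbound summB sums_summable[OF bsums]])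
    also have "\<dots> = c1 * r ^ d / (1 - r)" using bsums by (simp add: sums_iff)
    also have "\<dots> = (c1 / (1 - r)) * r ^ d" by simp
    also have "\<dots> \<le> C * r ^ d" by (rule mult_right_mono[OF C(2)]) (use r in simp)
    finally show ?thesis by (simp add: d_def)
  qed
  show ?thesis using r C key by (intro exI[of _ r] exI[of _ C]) auto
qed


end
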